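(* Let $q$ be an even integer with $q\geq4$. Then $\sqrt{(q-1)(17q-1)}$ is an integer if and only if \[ q\in\left\{\frac1{34}\left(\operatorname{tr}\!\left((2177+528\sqrt{17})^{m}(433+105\sqrt{17})\right)+18\right)\;\middle|\;m\in\mathbb{Z}\right\}. \]
   Context: $\operatorname{tr}$ denotes the trace from $\mathbb{Q}(\sqrt{17})$ to $\mathbb{Q}$, i.e. $\operatorname{tr}(a+b\sqrt{17})=2a$ for $a,b\in\mathbb{Q}$. *)

theory Defs
  imports Complex_Main
begin

text \<open>Q(sqrt 17) is viewed inside the reals; the trace to Q is
  tr(a + b sqrt 17) = 2a for rational a, b (well defined since sqrt 17 is irrational).\<close>

definition tr17 :: "real \<Rightarrow> real" where
  "tr17 x = (THE t. \<exists>a b :: rat. x = of_rat a + of_rat b * sqrt 17 \<and> t = 2 * of_rat a)"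

end

theory Submission imports Defs "HOL-Computational_Algebra.Primes" begin
lemma nsq:
  fixes X k c :: int
  assumes "k^2 < c" "c < (k+1)^2" "0 \<le> k"
  shows "X^2 \<noteq> c"
proof
  assume h: "X^2 = c"
  have "X^2 = \<bar>X\<bar>^2" by simp
  show False
  proof (cases "\<bar>X\<bar> \<le> k")
    case True
    hence "\<bar>X\<bar>^2 \<le> k^2" by (intro power_mono) auto
    thus False using h assms by simp
  next
    case False
    hence "(k+1)^2 \<le> \<bar>X\<bar>^2" using assms by (intro power_mono) auto
    thus False using h assms by simp
  qed
qed

lemma sqeq:
  fixes X k :: int
  assumes "X^2 = k^2" "0 \<le> X" "0 \<le> k"
  shows "X = k"
  using assms by (simp add: power2_eq_iff_nonneg)
lemma base:
  fixes X y :: int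
  assumes "0 \<le> y" "y \<le> 64" "0 < X" "odd X" "X^2 = 17*y^2 + 64"
  shows "(X = 9 \<and> y = 1) \<or> (X = 161 \<and> y = 39)"
proof -
  have "y \<in> {0..64}" using assms by simp
  hence "y \<in> set [0..64]" by (simp only: set_upto)
  hence D: "y = 0 \<or> y = 1 \<or> y = 2 \<or> y = 3 \<or> y = 4 \<or> y = 5 \<or> y = 6 \<or> y = 7 \<or> y = 8 \<or> y = 9 \<or> y = 10 \<or> y = 11 \<or> y = 12 \<or> y = 13 \<or> y = 14 \<or> y = 15 \<or> y = 16 \<or> y = 17 \<or> y = 18 \<or> y = 19 \<or> y = 20 \<or> y = 21 \<or> y = 22 \<or> y = 23 \<or> y = 24 \<or> y = 25 \<or> y = 26 \<or> y = 27 \<or> y = 28 \<or> y = 29 \<or> y = 30 \<or> y = 31 \<or> y = 32 \<or> y = 33 \<or> y = 34 \<or> y = 35 \<or> y = 36 \<or> y = 37 \<or> y = 38 \<or> y = 39 \<or> y = 40 \<or> y = 41 \<or> y = 42 \<or> y = 43 \<or> y = 44 \<or> y = 45 \<or> y = 46 \<or> y = 47 \<or> y = 48 \<or> y = 49 \<or> y = 50 \<or> y = 51 \<or> y = 52 \<or> y = 53 \<or> y = 54 \<or> y = 55 \<or> y = 56 \<or> y = 57 \<or> y = 58 \<or> y = 59 \<or> y = 60 \<or> y = 61 \<or> y = 62 \<or> y = 63 \<or> y = 64" by (simp add: upto.simps)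
  have h0: "y \<noteq> 0"
  proof
    assume "y = 0"
    hence "X^2 = 8^2" using assms(5) by simp
    hence "X = 8" using sqeq[of X 8] assms(3) by simp
    thus False using assms(4) by simp
  qed
  have h2: "y \<noteq> 2"
  proof
    assume "y = 2"
    hence "X^2 = 132" using assms(5) by simp
    thus False using nsq[of 11 132 X] by simp
  qed
  have h3: "y \<noteq> 3"
  proof
    assume "y = 3"
    hence "X^2 = 217" using assms(5) by simp
    thus False using nsq[of 14 217 X] by simp
  qed
  have h4: "y \<noteq> 4"
  proof
    assume "y = 4"
    hence "X^2 = 336" using assms(5) by simp
    thus False using nsq[of 18 336 X] by simp
  qed
  have h5: "y \<noteq> 5"
  proof
    assume "y = 5"
    hence "X^2 = 489" using assms(5) by simp
    thus False using nsq[of 22 489 X] by simp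
  qed
  have h6: "y \<noteq> 6"
  proof
    assume "y = 6"
    hence "X^2 = 26^2" using assms(5) by simp
    hence "X = 26" using sqeq[of X 26] assms(3) by simp
    thus False using assms(4) by simp
  qed
  have h7: "y \<noteq> 7"
  proof
    assume "y = 7"
    hence "X^2 = 897" using assms(5) by simp
    thus False using nsq[of 29 897 X] by simp
  qed
  have h8: "y \<noteq> 8"
  proof
    assume "y = 8"
    hence "X^2 = 1152" using assms(5) by simp
    thus False using nsq[of 33 1152 X] by simp
  qed
  have h9: "y \<noteq> 9"
  proof
    assume "y = 9"
    hence "X^2 = 1441" using assms(5) by simp
    thus False using nsq[of 37 1441 X] by simp
  qed
  have h10: "y \<noteq> 10"
  proof
    assume "y = 10"
    hence "X^2 = 42^2" using assms(5) by simp
    hence "X = 42" using sqeq[of X 42] assms(3) by simp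
    thus False using assms(4) by simp
  qed
  have h11: "y \<noteq> 11"
  proof
    assume "y = 11"
    hence "X^2 = 2121" using assms(5) by simp
    thus False using nsq[of 46 2121 X] by simp
  qed
  have h12: "y \<noteq> 12"
  proof
    assume "y = 12"
    hence "X^2 = 2512" using assms(5) by simp
    thus False using nsq[of 50 2512 X] by simp
  qed
  have h13: "y \<noteq> 13"
  proof
    assume "y = 13"
    hence "X^2 = 2937" using assms(5) by simp
    thus False using nsq[of 54 2937 X] by simp
  qed
  have h14: "y \<noteq> 14"
  proof
    assume "y = 14"
    hence "X^2 = 3396" using assms(5) by simp
    thus False using nsq[of 58 3396 X] by simp
  qed
  have h15: "y \<noteq> 15"
  proof
    assume "y = 15"
    hence "X^2 = 3889" using assms(5) by simp
    thus False using nsq[of 62 3889 X] by simp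
  qed
  have h16: "y \<noteq> 16"
  proof
    assume "y = 16"
    hence "X^2 = 4416" using assms(5) by simp
    thus False using nsq[of 66 4416 X] by simp
  qed
  have h17: "y \<noteq> 17"
  proof
    assume "y = 17"
    hence "X^2 = 4977" using assms(5) by simp
    thus False using nsq[of 70 4977 X] by simp
  qed
  have h18: "y \<noteq> 18"
  proof
    assume "y = 18"
    hence "X^2 = 5572" using assms(5) by simp
    thus False using nsq[of 74 5572 X] by simp
  qed
  have h19: "y \<noteq> 19"
  proof
    assume "y = 19"
    hence "X^2 = 6201" using assms(5) by simp
    thus False using nsq[of 78 6201 X] by simp
  qed
  have h20: "y \<noteq> 20"
  proof
    assume "y = 20"
    hence "X^2 = 6864" using assms(5) by simp
    thus False using nsq[of 82 6864 X] by simp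
  qed
  have h21: "y \<noteq> 21"
  proof
    assume "y = 21"
    hence "X^2 = 7561" using assms(5) by simp
    thus False using nsq[of 86 7561 X] by simp
  qed
  have h22: "y \<noteq> 22"
  proof
    assume "y = 22"
    hence "X^2 = 8292" using assms(5) by simp
    thus False using nsq[of 91 8292 X] by simp
  qed
  have h23: "y \<noteq> 23"
  proof
    assume "y = 23"
    hence "X^2 = 9057" using assms(5) by simp
    thus False using nsq[of 95 9057 X] by simp
  qed
  have h24: "y \<noteq> 24"
  proof
    assume "y = 24"
    hence "X^2 = 9856" using assms(5) by simp
    thus False using nsq[of 99 9856 X] by simp
  qed
  have h25: "y \<noteq> 25"
  proof
    assume "y = 25"
    hence "X^2 = 10689" using assms(5) by simp
    thus False using nsq[of 103 10689 X] by simp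
  qed
  have h26: "y \<noteq> 26"
  proof
    assume "y = 26"
    hence "X^2 = 11556" using assms(5) by simp
    thus False using nsq[of 107 11556 X] by simp
  qed
  have h27: "y \<noteq> 27"
  proof
    assume "y = 27"
    hence "X^2 = 12457" using assms(5) by simp
    thus False using nsq[of 111 12457 X] by simp
  qed
  have h28: "y \<noteq> 28"
  proof
    assume "y = 28"
    hence "X^2 = 13392" using assms(5) by simp
    thus False using nsq[of 115 13392 X] by simp
  qed
  have h29: "y \<noteq> 29"
  proof
    assume "y = 29"
    hence "X^2 = 14361" using assms(5) by simp
    thus False using nsq[of 119 14361 X] by simp
  qed
  have h30: "y \<noteq> 30"
  proof
    assume "y = 30"
    hence "X^2 = 15364" using assms(5) by simp
    thus False using nsq[of 123 15364 X] by simp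
  qed
  have h31: "y \<noteq> 31"
  proof
    assume "y = 31"
    hence "X^2 = 16401" using assms(5) by simp
    thus False using nsq[of 128 16401 X] by simp
  qed
  have h32: "y \<noteq> 32"
  proof
    assume "y = 32"
    hence "X^2 = 17472" using assms(5) by simp
    thus False using nsq[of 132 17472 X] by simp
  qed
  have h33: "y \<noteq> 33"
  proof
    assume "y = 33"
    hence "X^2 = 18577" using assms(5) by simp
    thus False using nsq[of 136 18577 X] by simp
  qed
  have h34: "y \<noteq> 34"
  proof
    assume "y = 34"
    hence "X^2 = 19716" using assms(5) by simp
    thus False using nsq[of 140 19716 X] by simp
  qed
  have h35: "y \<noteq> 35"
  proof
    assume "y = 35"
    hence "X^2 = 20889" using assms(5) by simp
    thus False using nsq[of 144 20889 X] by simp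
  qed
  have h36: "y \<noteq> 36"
  proof
    assume "y = 36"
    hence "X^2 = 22096" using assms(5) by simp
    thus False using nsq[of 148 22096 X] by simp
  qed
  have h37: "y \<noteq> 37"
  proof
    assume "y = 37"
    hence "X^2 = 23337" using assms(5) by simp
    thus False using nsq[of 152 23337 X] by simp
  qed
  have h38: "y \<noteq> 38"
  proof
    assume "y = 38"
    hence "X^2 = 24612" using assms(5) by simp
    thus False using nsq[of 156 24612 X] by simp
  qed
  have h40: "y \<noteq> 40"
  proof
    assume "y = 40"
    hence "X^2 = 27264" using assms(5) by simp
    thus False using nsq[of 165 27264 X] by simp
  qed
  have h41: "y \<noteq> 41"
  proof
    assume "y = 41"
    hence "X^2 = 28641" using assms(5) by simp
    thus False using nsq[of 169 28641 X] by simp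
  qed
  have h42: "y \<noteq> 42"
  proof
    assume "y = 42"
    hence "X^2 = 30052" using assms(5) by simp
    thus False using nsq[of 173 30052 X] by simp
  qed
  have h43: "y \<noteq> 43"
  proof
    assume "y = 43"
    hence "X^2 = 31497" using assms(5) by simp
    thus False using nsq[of 177 31497 X] by simp
  qed
  have h44: "y \<noteq> 44"
  proof
    assume "y = 44"
    hence "X^2 = 32976" using assms(5) by simp
    thus False using nsq[of 181 32976 X] by simp
  qed
  have h45: "y \<noteq> 45"
  proof
    assume "y = 45"
    hence "X^2 = 34489" using assms(5) by simp
    thus False using nsq[of 185 34489 X] by simp
  qed
  have h46: "y \<noteq> 46"
  proof
    assume "y = 46"
    hence "X^2 = 36036" using assms(5) by simp
    thus False using nsq[of 189 36036 X] by simp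
  qed
  have h47: "y \<noteq> 47"
  proof
    assume "y = 47"
    hence "X^2 = 37617" using assms(5) by simp
    thus False using nsq[of 193 37617 X] by simp
  qed
  have h48: "y \<noteq> 48"
  proof
    assume "y = 48"
    hence "X^2 = 39232" using assms(5) by simp
    thus False using nsq[of 198 39232 X] by simp
  qed
  have h49: "y \<noteq> 49"
  proof
    assume "y = 49"
    hence "X^2 = 40881" using assms(5) by simp
    thus False using nsq[of 202 40881 X] by simp
  qed
  have h50: "y \<noteq> 50"
  proof
    assume "y = 50"
    hence "X^2 = 42564" using assms(5) by simp
    thus False using nsq[of 206 42564 X] by simp
  qed
  have h51: "y \<noteq> 51"
  proof
    assume "y = 51"
    hence "X^2 = 44281" using assms(5) by simp
    thus False using nsq[of 210 44281 X] by simp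
  qed
  have h52: "y \<noteq> 52"
  proof
    assume "y = 52"
    hence "X^2 = 46032" using assms(5) by simp
    thus False using nsq[of 214 46032 X] by simp
  qed
  have h53: "y \<noteq> 53"
  proof
    assume "y = 53"
    hence "X^2 = 47817" using assms(5) by simp
    thus False using nsq[of 218 47817 X] by simp
  qed
  have h54: "y \<noteq> 54"
  proof
    assume "y = 54"
    hence "X^2 = 49636" using assms(5) by simp
    thus False using nsq[of 222 49636 X] by simp
  qed
  have h55: "y \<noteq> 55"
  proof
    assume "y = 55"
    hence "X^2 = 51489" using assms(5) by simp
    thus False using nsq[of 226 51489 X] by simp
  qed
  have h56: "y \<noteq> 56"
  proof
    assume "y = 56"
    hence "X^2 = 53376" using assms(5) by simp
    thus False using nsq[of 231 53376 X] by simp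
  qed
  have h57: "y \<noteq> 57"
  proof
    assume "y = 57"
    hence "X^2 = 55297" using assms(5) by simp
    thus False using nsq[of 235 55297 X] by simp
  qed
  have h58: "y \<noteq> 58"
  proof
    assume "y = 58"
    hence "X^2 = 57252" using assms(5) by simp
    thus False using nsq[of 239 57252 X] by simp
  qed
  have h59: "y \<noteq> 59"
  proof
    assume "y = 59"
    hence "X^2 = 59241" using assms(5) by simp
    thus False using nsq[of 243 59241 X] by simp
  qed
  have h60: "y \<noteq> 60"
  proof
    assume "y = 60"
    hence "X^2 = 61264" using assms(5) by simp
    thus False using nsq[of 247 61264 X] by simp
  qed
  have h61: "y \<noteq> 61"
  proof
    assume "y = 61"
    hence "X^2 = 63321" using assms(5) by simp
    thus False using nsq[of 251 63321 X] by simp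
  qed
  have h62: "y \<noteq> 62"
  proof
    assume "y = 62"
    hence "X^2 = 65412" using assms(5) by simp
    thus False using nsq[of 255 65412 X] by simp
  qed
  have h63: "y \<noteq> 63"
  proof
    assume "y = 63"
    hence "X^2 = 67537" using assms(5) by simp
    thus False using nsq[of 259 67537 X] by simp
  qed
  have h64: "y \<noteq> 64"
  proof
    assume "y = 64"
    hence "X^2 = 264^2" using assms(5) by simp
    hence "X = 264" using sqeq[of X 264] assms(3) by simp
    thus False using assms(4) by simp
  qed
  have "y = 1 \<or> y = 39" using D h0 h2 h3 h4 h5 h6 h7 h8 h9 h10 h11 h12 h13 h14 h15 h16 h17 h18 h19 h20 h21 h22 h23 h24 h25 h26 h27 h28 h29 h30 h31 h32 h33 h34 h35 h36 h37 h38 h40 h41 h42 h43 h44 h45 h46 h47 h48 h49 h50 h51 h52 h53 h54 h55 h56 h57 h58 h59 h60 h61 h62 h63 h64 by simp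
  thus ?thesis
  proof
    assume "y = 1"
    hence "X^2 = 9^2" using assms(5) by simp
    hence "X = 9" using sqeq[of X 9] assms(3) by simp
    thus ?thesis using \<open>y = 1\<close> by simp
  next
    assume "y = 39"
    hence "X^2 = 161^2" using assms(5) by simp
    hence "X = 161" using sqeq[of X 161] assms(3) by simp
    thus ?thesis using \<open>y = 39\<close> by simp
  qed
qed

lemma s17: "sqrt 17 * sqrt 17 = (17::real)" by simp

lemma C9:
  fixes X X' y' :: int
  assumes "X = 33*X' + 136*y'" "X' mod 34 = 9" shows "X mod 34 = 25"
proof -
  define k where "k = X' div 34"
  have "X' = 34*k + 9" unfolding k_def using assms(2) div_mult_mod_eq[of X' 34] by linarith
  hence "X = 25 + (33*k + 4*y' + 8)*34" using assms(1) by simp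
  hence "X mod 34 = 25 mod 34" by (simp only: mod_mult_self1)
  thus ?thesis by simp
qed
lemma C25:
  fixes X X' y' :: int
  assumes "X = 33*X' + 136*y'" "X' mod 34 = 25" shows "X mod 34 = 9"
proof -
  define k where "k = X' div 34"
  have "X' = 34*k + 25" unfolding k_def using assms(2) div_mult_mod_eq[of X' 34] by linarith
  hence "X = 9 + (33*k + 4*y' + 24)*34" using assms(1) by simp
  hence "X mod 34 = 9 mod 34" by (simp only: mod_mult_self1)
  thus ?thesis by simp
qed
lemma Xmod:
  fixes q :: int assumes "even q" shows "(17*q - 9) mod 34 = 25"
proof -
  obtain k where "q = 2*k" using assms by (elim evenE)
  hence "17*q - 9 = 25 + (k - 1)*34" by simp
  hence "(17*q - 9) mod 34 = 25 mod 34" by (simp only: mod_mult_self1)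
  thus ?thesis by simp
qed
lemma small_case:
  fixes X y :: int
  assumes "0 \<le> y" "0 < X" "odd X" "X^2 - 17*y^2 = 64" and True: "y \<le> 64"
  shows "\<exists>n. (of_int X + of_int y * sqrt 17 = (33 + 8 * sqrt 17)^n * (9 + sqrt 17)
            \<and> of_int X - of_int y * sqrt 17 = (33 - 8 * sqrt 17)^n * (9 - sqrt 17)
            \<and> X mod 34 = (if even n then 9 else 25))
         \<or> (of_int X + of_int y * sqrt 17 = (33 + 8 * sqrt 17)^Suc n * (9 - sqrt 17)
            \<and> of_int X - of_int y * sqrt 17 = (33 - 8 * sqrt 17)^Suc n * (9 + sqrt 17)
            \<and> X mod 34 = (if even n then 25 else 9))"
proof -
    have eq0: "X^2 = 17*y^2 + 64" using assms(4) by simp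
  have "(X = 9 \<and> y = 1) \<or> (X = 161 \<and> y = 39)"
    using base[OF assms(1) True assms(2) assms(3) eq0] .
  thus ?thesis
  proof
    assume h: "X = 9 \<and> y = 1"
    hence hX: "X = 9" and hY: "y = 1" by auto
    have a1: "of_int (9::int) + of_int (1::int) * sqrt 17 = (33 + 8*sqrt 17)^0 * (9 + sqrt (17::real))" by simp
    have a2: "of_int (9::int) - of_int (1::int) * sqrt 17 = (33 - 8*sqrt 17)^0 * (9 - sqrt (17::real))" by simp
    have a3: "(9::int) mod 34 = (if even (0::nat) then 9 else 25)" by simp
    show ?thesis unfolding hX hY using a1 a2 a3 by blast
  next
    assume h: "X = 161 \<and> y = 39"
    hence hX: "X = 161" and hY: "y = 39" by auto
    have e1: "(33 + 8 * sqrt 17) * (9 - sqrt 17) = 161 + 39 * (sqrt 17::real)"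
      by (simp add: algebra_simps s17)
    have e2: "(33 - 8 * sqrt 17) * (9 + sqrt 17) = 161 - 39 * (sqrt 17::real)"
      by (simp add: algebra_simps s17)
    have a1: "of_int (161::int) + of_int (39::int) * sqrt 17 = (33 + 8*sqrt 17)^Suc 0 * (9 - sqrt (17::real))"
      using e1 by simp
    have a2: "of_int (161::int) - of_int (39::int) * sqrt 17 = (33 - 8*sqrt 17)^Suc 0 * (9 + sqrt (17::real))"
      using e2 by simp
    have a3: "(161::int) mod 34 = (if even (0::nat) then 25 else 9)" by simp
    show ?thesis unfolding hX hY using a1 a2 a3 by blast
  qed
qed

lemma descent:
  fixes X y :: int
  assumes "0 \<le> y" "0 < X" "odd X" "X^2 - 17*y^2 = 64"
  shows "\<exists>n. (of_int X + of_int y * sqrt 17 = (33 + 8 * sqrt 17)^n * (9 + sqrt 17)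
            \<and> of_int X - of_int y * sqrt 17 = (33 - 8 * sqrt 17)^n * (9 - sqrt 17)
            \<and> X mod 34 = (if even n then 9 else 25))
         \<or> (of_int X + of_int y * sqrt 17 = (33 + 8 * sqrt 17)^Suc n * (9 - sqrt 17)
            \<and> of_int X - of_int y * sqrt 17 = (33 - 8 * sqrt 17)^Suc n * (9 + sqrt 17)
            \<and> X mod 34 = (if even n then 25 else 9))"
  using assms
proof (induction "nat y" arbitrary: X y rule: less_induct)
  case less
  show ?case
  proof (cases "y \<le> 64")
    case True
    show ?thesis using small_case[OF less.prems True] .
  next
    case False
    define X' where "X' = 33*X - 136*y"
    define y' where "y' = 33*y - 8*X"
    have eq: "X^2 = 17*y^2 + 64" using less.prems by simp
    have yy: "(64::int)^2 < y^2" using False by (intro power_strict_mono) auto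
    have "(8*X)^2 < (33*y)^2" using eq yy by (simp add: power_mult_distrib)
    hence "8*X < 33*y" using less.prems power_less_imp_less_base[of "8*X" 2 "33*y"] by simp
    hence y'pos: "0 < y'" unfolding y'_def by simp
    have y2: "0 \<le> y^2" by simp
    have "(4*y)^2 = 16*y^2" by (simp add: power_mult_distrib)
    hence "(4*y)^2 < X^2" using eq y2 by linarith
    hence "4*y < X" using less.prems power_less_imp_less_base[of "4*y" 2 X] by simp
    hence y'lt: "y' < y" unfolding y'_def by simp
    have "(136*y)^2 = 18496*y^2" "(33*X)^2 = 1089*X^2" by (simp_all add: power_mult_distrib)
    hence "(136*y)^2 < (33*X)^2" using eq y2 by linarith
    hence "136*y < 33*X" using less.prems power_less_imp_less_base[of "136*y" 2 "33*X"] by simp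
    hence X'pos: "0 < X'" unfolding X'_def by simp
    have X'odd: "odd X'" unfolding X'_def using less.prems by simp
    have norm: "X'^2 - 17*y'^2 = 64" unfolding X'_def y'_def using less.prems
      by (simp add: power2_eq_square algebra_simps)
    have Xe: "X = 33*X' + 136*y'" and ye: "y = 8*X' + 33*y'"
      unfolding X'_def y'_def by simp_all
    have ylt: "nat y' < nat y" using y'pos y'lt by simp
    have y'nn: "0 \<le> y'" using y'pos by simp
    have "\<exists>n. (of_int X' + of_int y' * sqrt 17 = (33 + 8 * sqrt 17)^n * (9 + sqrt 17)
            \<and> of_int X' - of_int y' * sqrt 17 = (33 - 8 * sqrt 17)^n * (9 - sqrt 17)
            \<and> X' mod 34 = (if even n then 9 else 25))
         \<or> (of_int X' + of_int y' * sqrt 17 = (33 + 8 * sqrt 17)^Suc n * (9 - sqrt 17)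
            \<and> of_int X' - of_int y' * sqrt 17 = (33 - 8 * sqrt 17)^Suc n * (9 + sqrt 17)
            \<and> X' mod 34 = (if even n then 25 else 9))"
      by (rule less.hyps[OF ylt y'nn X'pos X'odd norm])
    then obtain n where IH: "(of_int X' + of_int y' * sqrt 17 = (33 + 8 * sqrt 17)^n * (9 + sqrt 17)
            \<and> of_int X' - of_int y' * sqrt 17 = (33 - 8 * sqrt 17)^n * (9 - sqrt 17)
            \<and> X' mod 34 = (if even n then 9 else 25))
         \<or> (of_int X' + of_int y' * sqrt 17 = (33 + 8 * sqrt 17)^Suc n * (9 - sqrt 17)
            \<and> of_int X' - of_int y' * sqrt 17 = (33 - 8 * sqrt 17)^Suc n * (9 + sqrt 17)
            \<and> X' mod 34 = (if even n then 25 else 9))" by blast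
    have P: "of_int X + of_int y * sqrt 17 = (33 + 8 * sqrt 17) * (of_int X' + of_int y' * sqrt (17::real))"
      unfolding Xe ye by (simp add: algebra_simps s17)
    have M: "of_int X - of_int y * sqrt 17 = (33 - 8 * sqrt 17) * (of_int X' - of_int y' * sqrt (17::real))"
      unfolding Xe ye by (simp add: algebra_simps s17)
    have C9: "X' mod 34 = 9 \<Longrightarrow> X mod 34 = 25" and C25: "X' mod 34 = 25 \<Longrightarrow> X mod 34 = 9"
      using C9[OF Xe] C25[OF Xe] by blast+
    from IH show ?thesis
    proof
      assume h: "(of_int X' + of_int y' * sqrt 17 = (33 + 8 * sqrt 17)^n * (9 + sqrt 17)
            \<and> of_int X' - of_int y' * sqrt 17 = (33 - 8 * sqrt 17)^n * (9 - sqrt 17)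
            \<and> X' mod 34 = (if even n then 9 else 25))"
      hence h1: "of_int X' + of_int y' * sqrt 17 = (33 + 8 * sqrt 17)^n * (9 + sqrt (17::real))"
        and h2: "of_int X' - of_int y' * sqrt 17 = (33 - 8 * sqrt 17)^n * (9 - sqrt (17::real))"
        and h3: "X' mod 34 = (if even n then 9 else 25)" by blast+
      have g1: "of_int X + of_int y * sqrt 17 = (33 + 8 * sqrt 17)^Suc n * (9 + sqrt (17::real))"
        unfolding P h1 by (simp only: power_Suc mult.assoc)
      have g2: "of_int X - of_int y * sqrt 17 = (33 - 8 * sqrt 17)^Suc n * (9 - sqrt (17::real))"
        unfolding M h2 by (simp only: power_Suc mult.assoc)
      have g3: "X mod 34 = (if even (Suc n) then 9 else 25)"
      proof (cases "even n")
        case True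
        then show ?thesis using h3 C9 by simp
      next
        case False
        then show ?thesis using h3 C25 by simp
      qed
      show ?thesis using g1 g2 g3 by blast
    next
      assume h: "(of_int X' + of_int y' * sqrt 17 = (33 + 8 * sqrt 17)^Suc n * (9 - sqrt 17)
            \<and> of_int X' - of_int y' * sqrt 17 = (33 - 8 * sqrt 17)^Suc n * (9 + sqrt 17)
            \<and> X' mod 34 = (if even n then 25 else 9))"
      hence h1: "of_int X' + of_int y' * sqrt 17 = (33 + 8 * sqrt 17)^Suc n * (9 - sqrt (17::real))"
        and h2: "of_int X' - of_int y' * sqrt 17 = (33 - 8 * sqrt 17)^Suc n * (9 + sqrt (17::real))"
        and h3: "X' mod 34 = (if even n then 25 else 9)" by blast+
      have g1: "of_int X + of_int y * sqrt 17 = (33 + 8 * sqrt 17)^Suc (Suc n) * (9 - sqrt (17::real))"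
        unfolding P h1 by (simp only: power_Suc mult.assoc)
      have g2: "of_int X - of_int y * sqrt 17 = (33 - 8 * sqrt 17)^Suc (Suc n) * (9 + sqrt (17::real))"
        unfolding M h2 by (simp only: power_Suc mult.assoc)
      have g3: "X mod 34 = (if even (Suc n) then 25 else 9)"
      proof (cases "even n")
        case True
        then show ?thesis using h3 C25 by simp
      next
        case False
        then show ?thesis using h3 C9 by simp
      qed
      show ?thesis using g1 g2 g3 by blast
    qed
  qed
qed

lemma sqrt17_irr: "sqrt (17::real) \<notin> \<rat>"
proof
  have p: "prime (17::nat)" by code_simp
  assume "sqrt (17::real) \<in> \<rat>"
  hence "sqrt (real (17::nat)) \<in> \<rat>" by simp
  then obtain m n :: nat
    where n: "n \<noteq> 0"
      and sqrt_rat: "\<bar>sqrt (real (17::nat))\<bar> = m / n"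
      and "coprime m n" by (rule Rats_abs_nat_div_natE)
  have eq: "m\<^sup>2 = 17 * n\<^sup>2"
  proof -
    from n and sqrt_rat have "m = \<bar>sqrt (real (17::nat))\<bar> * n" by simp
    then have "real (m\<^sup>2) = (sqrt 17)\<^sup>2 * real (n\<^sup>2)" by (simp add: power_mult_distrib)
    also have "(sqrt (17::real))\<^sup>2 = 17" by simp
    finally have "real (m\<^sup>2) = real (17 * n\<^sup>2)" by simp
    thus ?thesis by (simp only: of_nat_eq_iff)
  qed
  have "17 dvd m \<and> 17 dvd n"
  proof
    from eq have "17 dvd m\<^sup>2" by simp
    with p show "17 dvd m" by (rule prime_dvd_power)
    then obtain k where "m = 17 * k" ..
    with eq have "17 * n\<^sup>2 = 17\<^sup>2 * k\<^sup>2" by algebra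
    hence "n\<^sup>2 = 17 * k\<^sup>2" by (simp add: power2_eq_square)
    then have "17 dvd n\<^sup>2" by simp
    with p show "17 dvd n" by (rule prime_dvd_power)
  qed
  then have "17 dvd gcd m n" by simp
  with \<open>coprime m n\<close> show False by simp
qed

lemma tr17_int: "tr17 (of_int a + of_int b * sqrt 17) = 2 * of_int a"
  unfolding tr17_def
proof (rule the_equality)
  show "\<exists>a' b'::rat. of_int a + of_int b * sqrt 17 = of_rat a' + of_rat b' * sqrt 17 \<and> 2 * of_int a = 2 * (of_rat a' :: real)"
    by (rule exI[of _ "of_int a"], rule exI[of _ "of_int b"]) simp
  fix t
  assume "\<exists>a' b'::rat. of_int a + of_int b * sqrt 17 = of_rat a' + of_rat b' * sqrt 17 \<and> t = 2 * (of_rat a' :: real)"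
  then obtain a' b' :: rat where h: "of_int a + of_int b * sqrt 17 = of_rat a' + of_rat b' * sqrt 17"
    and ht: "t = 2 * (of_rat a' :: real)" by blast
  show "t = 2 * of_int a"
  proof (cases "of_rat b' = (of_int b::real)")
    case True
    then have "of_rat a' = (of_int a :: real)" using h by simp
    thus ?thesis using ht by simp
  next
    case False
    hence ne: "of_rat b' - of_int b \<noteq> (0::real)" by simp
    have "(of_rat b' - of_int b) * sqrt 17 = of_int a - (of_rat a' :: real)" using h by (simp add: algebra_simps)
    hence "sqrt 17 = (of_int a - of_rat a') / (of_rat b' - (of_int b :: real))"
      using ne by (simp add: field_simps)
    moreover have "(of_int a - of_rat a') / (of_rat b' - (of_int b :: real)) \<in> \<rat>"
      by (intro Rats_divide Rats_diff) auto
    ultimately show ?thesis using sqrt17_irr by simp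
  qed
qed

lemma pow_form:
  fixes c d :: int
  assumes "c^2 - 17*d^2 = 1"
  shows "\<exists>a' b'. (of_int c + of_int d * sqrt 17)^n * (of_int a + of_int b * sqrt 17) = of_int a' + of_int b' * sqrt (17::real) \<and> a'^2 - 17*b'^2 = a^2 - 17*b^2"
proof (induction n arbitrary: a b)
  case 0
  then show ?case by auto
next
  case (Suc n)
  have e: "(of_int c + of_int d * sqrt 17) * (of_int a + of_int b * sqrt 17)
     = of_int (c*a + 17*d*b) + of_int (c*b + d*a) * sqrt (17::real)"
    by (simp add: algebra_simps s17)
  have nrm: "(c*a + 17*d*b)^2 - 17*(c*b + d*a)^2 = (c^2 - 17*d^2) * (a^2 - 17*b^2)"
    by (simp add: power2_eq_square algebra_simps)
  obtain a' b' where h1: "(of_int c + of_int d * sqrt 17)^n * (of_int (c*a + 17*d*b) + of_int (c*b + d*a) * sqrt 17) = of_int a' + of_int b' * sqrt (17::real)"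
    and h2: "a'^2 - 17*b'^2 = (c*a + 17*d*b)^2 - 17*(c*b + d*a)^2"
    using Suc.IH[of "c*a + 17*d*b" "c*b + d*a"] by blast
  have "(of_int c + of_int d * sqrt 17)^Suc n * (of_int a + of_int b * sqrt 17)
      = (of_int c + of_int d * sqrt 17)^n * ((of_int c + of_int d * sqrt 17) * (of_int a + of_int b * sqrt (17::real)))"
    by (simp add: mult_ac)
  also have "\<dots> = (of_int c + of_int d * sqrt 17)^n * (of_int (c*a + 17*d*b) + of_int (c*b + d*a) * sqrt 17)"
    by (simp only: e)
  also have "\<dots> = of_int a' + of_int b' * sqrt 17" by (rule h1)
  finally show ?case using h2 nrm assms by (intro exI[of _ a'] exI[of _ b']) simp
qed

theorem lemmaA3:
  fixes q :: int
  assumes "even q" and "q \<ge> 4"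
  shows "sqrt (real_of_int ((q - 1) * (17 * q - 1))) \<in> \<int> \<longleftrightarrow>
         real_of_int q \<in> {(tr17 ((2177 + 528 * sqrt 17) powi m * (433 + 105 * sqrt 17)) + 18) / 34
                            | m :: int. True}"
proof
  assume "sqrt (real_of_int ((q - 1) * (17 * q - 1))) \<in> \<int>"
  then obtain t where ht: "sqrt (real_of_int ((q - 1) * (17 * q - 1))) = of_int t"
    by (elim Ints_cases) 
  have Npos: "0 \<le> (q - 1) * (17 * q - 1)" using assms by simp
  have tnn: "0 \<le> t" using ht by (metis of_int_0_le_iff real_sqrt_ge_zero Npos of_int_0_le_iff)
  have "real_of_int ((q - 1) * (17 * q - 1)) = (sqrt (real_of_int ((q - 1) * (17 * q - 1))))^2"
  proof -
    have "0 \<le> real_of_int ((q - 1) * (17 * q - 1))" using Npos by (simp only: of_int_0_le_iff)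
    from real_sqrt_pow2[OF this] show ?thesis by (rule sym)
  qed
  also have "\<dots> = real_of_int (t^2)" using ht by simp
  finally have Nt: "(q - 1) * (17 * q - 1) = t^2" by (simp only: of_int_eq_iff)
  define X where "X = 17*q - 9"
  have X2: "X^2 = 289*(q*q) - 306*q + 81" unfolding X_def by (simp add: power2_eq_square algebra_simps)
  have "(q - 1) * (17 * q - 1) = 17*(q*q) - 18*q + 1" by (simp add: algebra_simps)
  hence norm: "X^2 - 17*t^2 = 64" using X2 Nt by linarith
  have Xpos: "0 < X" unfolding X_def using assms by simp
  have Xodd: "odd X" unfolding X_def using assms by simp
  have Xmod: "X mod 34 = 25" unfolding X_def using Xmod[OF assms(1)] .
  define u :: real where "u = 33 + 8 * sqrt 17"
  define u' :: real where "u' = 33 - 8 * sqrt 17"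
  have uu: "u' * u = 1" unfolding u_def u'_def by (simp add: algebra_simps s17)
  have u2: "u^2 = 2177 + 528 * sqrt 17" unfolding u_def by (simp add: power2_eq_square algebra_simps s17)
  have u'2: "u'^2 = 2177 - 528 * sqrt 17" unfolding u'_def by (simp add: power2_eq_square algebra_simps s17)
  have ua: "u * (9 + sqrt 17) = 433 + 105 * sqrt 17" unfolding u_def by (simp add: algebra_simps s17)
  have inv: "inverse (2177 + 528 * sqrt 17) = (2177 - 528 * sqrt (17::real))"
    by (rule inverse_unique) (simp add: algebra_simps s17)
  have qX: "real_of_int q = (2 * of_int X + 18) / 34" unfolding X_def by simp
  from descent[OF tnn Xpos Xodd norm] obtain n where
    D: "(of_int X + of_int t * sqrt 17 = u^n * (9 + sqrt 17)
            \<and> of_int X - of_int t * sqrt 17 = u'^n * (9 - sqrt 17)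
            \<and> X mod 34 = (if even n then 9 else 25))
         \<or> (of_int X + of_int t * sqrt 17 = u^Suc n * (9 - sqrt 17)
            \<and> of_int X - of_int t * sqrt 17 = u'^Suc n * (9 + sqrt 17)
            \<and> X mod 34 = (if even n then 25 else 9))" unfolding u_def u'_def by blast
  then show "real_of_int q \<in> {(tr17 ((2177 + 528 * sqrt 17) powi m * (433 + 105 * sqrt 17)) + 18) / 34
                            | m :: int. True}"
  proof
    assume h: "of_int X + of_int t * sqrt 17 = u^n * (9 + sqrt 17)
            \<and> of_int X - of_int t * sqrt 17 = u'^n * (9 - sqrt 17)
            \<and> X mod 34 = (if even n then 9 else 25)"
    hence "odd n" using Xmod by (auto split: if_splits)
    then obtain j where nj: "n = 2*j + 1" by (elim oddE)
    have "(2177 + 528 * sqrt 17) powi (int j) * (433 + 105 * sqrt 17) = (u^2)^j * (u * (9 + sqrt 17))"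
      using u2 ua by simp
    also have "\<dots> = u^n * (9 + sqrt 17)" unfolding nj by (simp add: power_mult[symmetric] power_add mult_ac)
    also have "\<dots> = of_int X + of_int t * sqrt 17" using h by simp
    finally have "tr17 ((2177 + 528 * sqrt 17) powi (int j) * (433 + 105 * sqrt 17)) = 2 * of_int X"
      using tr17_int by simp
    hence "real_of_int q = (tr17 ((2177 + 528 * sqrt 17) powi (int j) * (433 + 105 * sqrt 17)) + 18) / 34"
      using qX by simp
    thus ?thesis by blast
  next
    assume h: "of_int X + of_int t * sqrt 17 = u^Suc n * (9 - sqrt 17)
            \<and> of_int X - of_int t * sqrt 17 = u'^Suc n * (9 + sqrt 17)
            \<and> X mod 34 = (if even n then 25 else 9)"
    hence "even n" using Xmod by (auto split: if_splits)
    then obtain j where nj: "n = 2*j" by (elim evenE)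
    have "(2177 + 528 * sqrt 17) powi (- int (j+1)) * (433 + 105 * sqrt 17)
         = (u'^2)^(j+1) * (u * (9 + sqrt 17))"
    proof -
      have "(2177 + 528 * sqrt 17) powi (- int (j+1)) = inverse ((2177 + 528 * sqrt (17::real)) powi int (j+1))"
        by (rule power_int_minus)
      also have "\<dots> = inverse ((2177 + 528 * sqrt (17::real)) ^ (j+1))" by (simp only: power_int_of_nat)
      also have "\<dots> = (inverse (2177 + 528 * sqrt (17::real))) ^ (j+1)" by (rule power_inverse[symmetric])
      also have "\<dots> = (u'^2)^(j+1)" by (simp only: inv u'2)
      finally have pe: "(2177 + 528 * sqrt 17) powi (- int (j+1)) = (u'^2)^(j+1)" .
      show ?thesis by (simp only: pe ua)
    qed
    also have "\<dots> = u'^(Suc n + 1) * (u * (9 + sqrt 17))" proof -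
      have ex: "Suc n + 1 = 2*(j+1)" using nj by simp
      show ?thesis by (simp only: ex power_mult)
    qed
    also have "\<dots> = u'^Suc n * (u' * u) * (9 + sqrt 17)" by (simp only: power_add power_one_right mult_ac)
    also have "\<dots> = of_int X + of_int (-t) * sqrt 17" using h uu by simp
    finally have "tr17 ((2177 + 528 * sqrt 17) powi (- int (j+1)) * (433 + 105 * sqrt 17)) = 2 * of_int X"
      using tr17_int[of X "-t"] by simp
    hence "real_of_int q = (tr17 ((2177 + 528 * sqrt 17) powi (- int (j+1)) * (433 + 105 * sqrt 17)) + 18) / 34"
      using qX by simp
    thus ?thesis by blast
  qed
next
  assume "real_of_int q \<in> {(tr17 ((2177 + 528 * sqrt 17) powi m * (433 + 105 * sqrt 17)) + 18) / 34
                            | m :: int. True}"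
  then obtain m where hq: "real_of_int q = (tr17 ((2177 + 528 * sqrt 17) powi m * (433 + 105 * sqrt 17)) + 18) / 34"
    by blast
  have inv: "inverse (2177 + 528 * sqrt 17) = (2177 - 528 * sqrt (17::real))"
    by (rule inverse_unique) (simp add: algebra_simps s17)
  have "\<exists>a b. (2177 + 528 * sqrt 17) powi m * (433 + 105 * sqrt 17) = of_int a + of_int b * sqrt (17::real) \<and> a^2 - 17*b^2 = 64"
  proof (cases "0 \<le> m")
    case True
    define k where "k = nat m"
    have mk: "m = int k" unfolding k_def using True by simp
    have c1: "(2177::int)^2 - 17*528^2 = 1" by simp
    obtain a' b' where e1: "(of_int 2177 + of_int 528 * sqrt 17)^k * (of_int 433 + of_int 105 * sqrt 17) = of_int a' + of_int b' * sqrt (17::real)"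
      and e2: "a'^2 - 17*b'^2 = 433^2 - 17*105^2" using pow_form[OF c1, of k 433 105] by blast
    have e1': "(2177 + 528 * sqrt 17)^k * (433 + 105 * sqrt 17) = of_int a' + of_int b' * sqrt (17::real)"
      using e1 by (simp only: of_int_numeral)
    have "(2177 + 528 * sqrt 17) powi m = (2177 + 528 * sqrt (17::real))^k" unfolding mk by (rule power_int_of_nat)
    hence "(2177 + 528 * sqrt 17) powi m * (433 + 105 * sqrt 17) = of_int a' + of_int b' * sqrt (17::real)"
      using e1' by (simp only:)
    moreover have "a'^2 - 17*b'^2 = 64" using e2 by simp
    ultimately show ?thesis by blast
  next
    case False
    define k where "k = nat (-m)"
    have mk: "m = - int k" unfolding k_def using False by simp
    have pm: "(2177 + 528 * sqrt 17) powi m = (2177 - 528 * sqrt (17::real))^k"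
    proof -
      have "(2177 + 528 * sqrt 17) powi (- int k) = inverse ((2177 + 528 * sqrt (17::real)) powi int k)"
        by (rule power_int_minus)
      also have "\<dots> = inverse ((2177 + 528 * sqrt (17::real)) ^ k)" by (simp only: power_int_of_nat)
      also have "\<dots> = (inverse (2177 + 528 * sqrt (17::real))) ^ k" by (rule power_inverse[symmetric])
      also have "\<dots> = (2177 - 528 * sqrt (17::real))^k" by (simp only: inv)
      finally show ?thesis unfolding mk .
    qed
    have c1: "(2177::int)^2 - 17*(-528)^2 = 1" by simp
    obtain a' b' where e1: "(of_int 2177 + of_int (-528) * sqrt 17)^k * (of_int 433 + of_int 105 * sqrt 17) = of_int a' + of_int b' * sqrt (17::real)"
      and e2: "a'^2 - 17*b'^2 = 433^2 - 17*105^2" using pow_form[OF c1, of k 433 105] by blast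
    have "(of_int 2177 + of_int (-528) * sqrt 17) = (2177 - 528 * sqrt (17::real))" by simp
    hence e1': "(2177 - 528 * sqrt 17)^k * (433 + 105 * sqrt 17) = of_int a' + of_int b' * sqrt (17::real)"
      using e1 by (simp only: of_int_numeral)
    hence "(2177 + 528 * sqrt 17) powi m * (433 + 105 * sqrt 17) = of_int a' + of_int b' * sqrt (17::real)"
      using pm by (simp only:)
    moreover have "a'^2 - 17*b'^2 = 64" using e2 by simp
    ultimately show ?thesis by blast
  qed
  then obtain a b where ab: "(2177 + 528 * sqrt 17) powi m * (433 + 105 * sqrt 17) = of_int a + of_int b * sqrt (17::real)"
    and nab: "a^2 - 17*b^2 = 64" by blast
  have "real_of_int q = (2 * of_int a + 18) / 34" using hq ab tr17_int by simp
  hence "real_of_int (34 * q) = real_of_int (2*a + 18)" by simp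
  hence "34 * q = 2*a + 18" by (simp only: of_int_eq_iff)
  hence aq: "a = 17*q - 9" by simp
  have A2: "a^2 = 289*(q*q) - 306*q + 81" unfolding aq by (simp add: power2_eq_square algebra_simps)
  have "(q - 1) * (17 * q - 1) = 17*(q*q) - 18*q + 1" by (simp add: algebra_simps)
  hence "(q - 1) * (17 * q - 1) = b^2" using A2 nab by linarith
  hence "sqrt (real_of_int ((q - 1) * (17 * q - 1))) = of_int \<bar>b\<bar>" by simp
  thus "sqrt (real_of_int ((q - 1) * (17 * q - 1))) \<in> \<int>" by simp
qed

end
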